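(* Let $W\in\mathbb{D}_n$ satisfy the Ground Assumption and let $\sigma\subset\mathcal{E}$. Then $\sigma\in\mathcal{C}(W)$ if and only if $\sigma\sqcup\mathcal{I}\in FP(W)$.
   Context: Threshold-linear network: $\dot x_i=-x_i+[\sum_j W_{ij}x_j+b_i]_+$ with $[y]_+=\max(0,y)$; a fixed point is $x^*$ with $x^*=[Wx^*+b]_+$. A Dale matrix $W\in\mathbb{D}_n$ is an $n\times n$ real matrix with a partition $[n]=\mathcal{E}\sqcup\mathcal{I}$ such that $W_{ii}=0$, $W_{ji}\ge0$ for all $j$ if $i\in\mathcal{E}$, $W_{ji}\le0$ for all $j$ if $i\in\mathcal{I}$. Ground Assumption: $(I-W)_\sigma$ nonsingular for every nonempty $\sigma\subset[n]$. Excitatory support: $\mathrm{supp}_+x=\{i\in\mathcal{E}:x_i>0\}$. Combinatorial code: $\mathcal{C}(W)=\{\mathrm{supp}_+x^*: b\in\mathbb{R}^n_{\ge0},\ x^*\in\mathbb{R}^n_{\ge0}\text{ a fixed point of }(W,b)\}$. $FP(W,b)$ is the set of supports $\{i\in[n]:x^*_i>0\}$ of all fixed points $x^*$ of $(W,b)$, and $FP(W)=\bigcup_{b\in\mathbb{R}^n_{\ge0}}FP(W,b)$. *)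

theory Defs
  imports Jordan_Normal_Form.Determinant Jordan_Normal_Form.DL_Submatrix
begin

definition dale_matrix :: "nat \<Rightarrow> real mat \<Rightarrow> nat set \<Rightarrow> nat set \<Rightarrow> bool" where
  "dale_matrix n W E Inh \<longleftrightarrow>
     W \<in> carrier_mat n n \<and> E \<union> Inh = {0..<n} \<and> E \<inter> Inh = {} \<and>
     (\<forall>i<n. W $$ (i,i) = 0) \<and>
     (\<forall>i\<in>E. \<forall>j<n. W $$ (j,i) \<ge> 0) \<and>
     (\<forall>i\<in>Inh. \<forall>j<n. W $$ (j,i) \<le> 0)"

definition ground_assumption :: "nat \<Rightarrow> real mat \<Rightarrow> bool" where
  "ground_assumption n W \<longleftrightarrow>
     (\<forall>\<sigma>. \<sigma> \<noteq> {} \<longrightarrow> \<sigma> \<subseteq> {0..<n} \<longrightarrow>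
        det (submatrix (1\<^sub>m n - W) \<sigma> \<sigma>) \<noteq> 0)"

definition tln_fixed_point :: "nat \<Rightarrow> real mat \<Rightarrow> real vec \<Rightarrow> real vec \<Rightarrow> bool" where
  "tln_fixed_point n W b x \<longleftrightarrow>
     x \<in> carrier_vec n \<and> (\<forall>i<n. x $ i = max 0 ((W *\<^sub>v x) $ i + b $ i))"

definition nonneg_vec :: "nat \<Rightarrow> real vec \<Rightarrow> bool" where
  "nonneg_vec n v \<longleftrightarrow> v \<in> carrier_vec n \<and> (\<forall>i<n. v $ i \<ge> 0)"

definition supp_vec :: "nat \<Rightarrow> real vec \<Rightarrow> nat set" where
  "supp_vec n x = {i. i < n \<and> x $ i > 0}"

definition FP_b :: "nat \<Rightarrow> real mat \<Rightarrow> real vec \<Rightarrow> nat set set" where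
  "FP_b n W b = {supp_vec n x | x. tln_fixed_point n W b x}"

definition FP :: "nat \<Rightarrow> real mat \<Rightarrow> nat set set" where
  "FP n W = (\<Union>b\<in>{b. nonneg_vec n b}. FP_b n W b)"

definition comb_code :: "nat \<Rightarrow> real mat \<Rightarrow> nat set \<Rightarrow> nat set set" where
  "comb_code n W E = {{i \<in> E. x $ i > 0} | b x.
      nonneg_vec n b \<and> nonneg_vec n x \<and> tln_fixed_point n W b x}"

end

theory Submission
  imports Defs
begin

lemma mv_sum:
  assumes "W \<in> carrier_mat n n" "x \<in> carrier_vec n" "i < n"
  shows "(W *\<^sub>v x) $ i = (\<Sum>l\<in>{0..<n}. W $$ (i,l) * x $ l)"
  using assms by (auto simp: scalar_prod_def intro!: sum.cong)

theorem mainTheorem13: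
  fixes n :: nat and W :: "real mat" and E Inh \<sigma> :: "nat set"
  assumes "dale_matrix n W E Inh"
    and "ground_assumption n W"
    and "\<sigma> \<subseteq> E"
  shows "\<sigma> \<in> comb_code n W E \<longleftrightarrow> \<sigma> \<union> Inh \<in> FP n W"
proof
  have W: "W \<in> carrier_mat n n" and part: "E \<union> Inh = {0..<n}" "E \<inter> Inh = {}"
    and colE: "\<And>i j. i\<in>E \<Longrightarrow> j<n \<Longrightarrow> W $$ (j,i) \<ge> 0"
    and colI: "\<And>i j. i\<in>Inh \<Longrightarrow> j<n \<Longrightarrow> W $$ (j,i) \<le> 0"
    using assms(1) unfolding dale_matrix_def by auto
  have "E \<subseteq> {0..<n}" "Inh \<subseteq> {0..<n}" using part by blast+
  then have finE: "finite E" and finI: "finite Inh" by (auto intro: finite_subset)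
  {
    assume "\<sigma> \<union> Inh \<in> FP n W"
    then obtain b x where b: "nonneg_vec n b" and fp: "tln_fixed_point n W b x"
      and s: "supp_vec n x = \<sigma> \<union> Inh"
      unfolding FP_def FP_b_def by auto
    have xn: "nonneg_vec n x" using fp unfolding tln_fixed_point_def nonneg_vec_def
      by simp
    have "{i \<in> E. x $ i > 0} = \<sigma>"
    proof -
      have "\<And>i. i \<in> E \<Longrightarrow> i < n" using part by auto
      then show ?thesis using s assms(3) part(2) unfolding supp_vec_def by blast
    qed
    then show "\<sigma> \<in> comb_code n W E" unfolding comb_code_def using b xn fp by blast
  }
  {
    assume "\<sigma> \<in> comb_code n W E"
    then obtain b x where b: "nonneg_vec n b" and xn: "nonneg_vec n x"
      and fp: "tln_fixed_point n W b x" and s: "\<sigma> = {i \<in> E. x $ i > 0}"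
      unfolding comb_code_def by auto
    have xc: "x \<in> carrier_vec n" and xfp: "\<And>i. i<n \<Longrightarrow> x $ i = max 0 ((W *\<^sub>v x) $ i + b $ i)"
      using fp unfolding tln_fixed_point_def by auto
    have x0: "\<And>i. i<n \<Longrightarrow> x $ i \<ge> 0" using xn unfolding nonneg_vec_def by auto
    have b0: "\<And>i. i<n \<Longrightarrow> b $ i \<ge> 0" and bc: "b \<in> carrier_vec n"
      using b unfolding nonneg_vec_def by auto
    define c where "c k = (\<Sum>l\<in>E. W $$ (k,l) * x $ l)" for k
    have c0: "c k \<ge> 0" if "k < n" for k
      unfolding c_def
    proof (rule sum_nonneg)
      fix l assume l: "l \<in> E"
      then have "l < n" using part by auto
      then show "0 \<le> W $$ (k,l) * x $ l" using colE[OF l that] x0 by simp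
    qed
    define y where "y = vec n (\<lambda>j. if j \<in> Inh then x $ j + 1 + c j else x $ j)"
    have yc: "y \<in> carrier_vec n" unfolding y_def by simp
    have yge: "x $ j \<le> y $ j" if "j < n" for j
      using that c0 by (auto simp: y_def)
    have yE: "y $ j = x $ j" if "j < n" "j \<in> E" for j using that part(2) by (auto simp: y_def)
    have yI: "y $ j = x $ j + 1 + c j" if "j < n" "j \<in> Inh" for j using that by (auto simp: y_def)
    have Wyx: "(W *\<^sub>v y) $ i \<le> (W *\<^sub>v x) $ i" if "i < n" for i
    proof -
      have "(\<Sum>l\<in>{0..<n}. W $$ (i,l) * y $ l) \<le> (\<Sum>l\<in>{0..<n}. W $$ (i,l) * x $ l)"
      proof (rule sum_mono)
        fix l assume l: "l \<in> {0..<n}"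
        show "W $$ (i,l) * y $ l \<le> W $$ (i,l) * x $ l"
        proof (cases "l \<in> E")
          case True then show ?thesis using l yE by simp
        next
          case False
          then have "l \<in> Inh" using l part by auto
          then have "W $$ (i,l) \<le> 0" using colI that by auto
          then show ?thesis using yge l by (simp add: mult_left_mono_neg)
        qed
      qed
      then show ?thesis using mv_sum[OF W yc that] mv_sum[OF W xc that] by simp
    qed
    have WyI: "(W *\<^sub>v y) $ k \<le> c k" if "k < n" for k
    proof -
      have "(\<Sum>l\<in>{0..<n}. W $$ (k,l) * y $ l) = (\<Sum>l\<in>E. W $$ (k,l) * y $ l) + (\<Sum>l\<in>Inh. W $$ (k,l) * y $ l)"
        using part finE finI by (metis sum.union_disjoint)
      also have "(\<Sum>l\<in>E. W $$ (k,l) * y $ l) = c k"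
        unfolding c_def
      proof (rule sum.cong)
        fix l assume "l \<in> E"
        moreover then have "l < n" using part by auto
        ultimately show "W $$ (k,l) * y $ l = W $$ (k,l) * x $ l" using yE by simp
      qed simp
      also have "(\<Sum>l\<in>Inh. W $$ (k,l) * y $ l) \<le> 0"
      proof (rule sum_nonpos)
        fix l assume l: "l \<in> Inh"
        then have ln: "l < n" using part by auto
        have "W $$ (k,l) \<le> 0" using colI l that by auto
        moreover have "y $ l \<ge> 0" using yge[OF ln] x0[OF ln] by linarith
        ultimately show "W $$ (k,l) * y $ l \<le> 0" by (simp add: mult_nonpos_nonneg)
      qed
      finally show ?thesis using mv_sum[OF W yc that] by simp
    qed
    define b' where "b' = vec n (\<lambda>i. if i \<in> E \<and> x $ i = 0 then b $ i else y $ i - (W *\<^sub>v y) $ i)"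
    have b'n: "nonneg_vec n b'"
      unfolding nonneg_vec_def
    proof (intro conjI allI impI)
      show "b' \<in> carrier_vec n" unfolding b'_def by simp
      fix i assume i: "i < n"
      show "0 \<le> b' $ i"
      proof (cases "i \<in> E")
        case True
        show ?thesis
        proof (cases "x $ i = 0")
          case True then show ?thesis using i \<open>i\<in>E\<close> b0 by (simp add: b'_def)
        next
          case False
          then have "x $ i > 0" using x0[OF i] by simp
          then have "x $ i = (W *\<^sub>v x) $ i + b $ i" using xfp[OF i] by (simp add: max_def split: if_splits)
          then show ?thesis using i False Wyx[OF i] yE[OF i True] b0[OF i] by (simp add: b'_def)
        qed
      next
        case False
        then have "i \<in> Inh" using i part by auto
        then show ?thesis using i False WyI[OF i] yI[OF i] x0[OF i] by (simp add: b'_def)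
      qed
    qed
    have yfp: "tln_fixed_point n W b' y"
      unfolding tln_fixed_point_def
    proof (intro conjI allI impI)
      show "y \<in> carrier_vec n" by (rule yc)
      fix i assume i: "i < n"
      show "y $ i = max 0 ((W *\<^sub>v y) $ i + b' $ i)"
      proof (cases "i \<in> E \<and> x $ i = 0")
        case True
        then have "(W *\<^sub>v x) $ i + b $ i \<le> 0" using xfp[OF i] by (metis max.cobounded2)
        then show ?thesis using True i Wyx[OF i] yE[OF i] by (simp add: b'_def max_def)
      next
        case False
        have "y $ i \<ge> 0" using yge[OF i] x0[OF i] by linarith
        moreover have "b' $ i = y $ i - (W *\<^sub>v y) $ i"
          unfolding b'_def using False i by (subst index_vec) auto
        ultimately show ?thesis by (simp add: max_def)
      qed
    qed
    have "supp_vec n y = \<sigma> \<union> Inh"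
    proof -
      have "y $ i > 0" if "i \<in> Inh" for i
      proof -
        have i: "i < n" using that part by auto
        show ?thesis using yI[OF i that] x0[OF i] c0[OF i] by linarith
      qed
      moreover have "\<And>i. i \<in> E \<Longrightarrow> i < n" "\<And>i. i \<in> Inh \<Longrightarrow> i < n" using part by auto
      ultimately show ?thesis unfolding supp_vec_def s using yE part by fastforce
    qed
    then show "\<sigma> \<union> Inh \<in> FP n W" unfolding FP_def FP_b_def using b'n yfp by blast
  }
qed

end
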